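(* Fix a leader policy $\pi$ and functions $\tilde Q_h:\mathcal S\times\mathcal B\to\mathbb R$, $h\in[H]$; let $\tilde V_h(s)=\eta^{-1}\log\sum_be^{\eta\tilde Q_h(s,b)}$, $\tilde A_h=\tilde Q_h-\tilde V_h$, $\tilde\nu_h(b\mid s)=\exp(\eta\tilde A_h(s,b))$, $\tilde V_{H+1}=0$. Define $$\Delta_h^{(1)}(s_h,b_h)=\mathbb E_{s_h,b_h}\Bigl[\sum_{i=h}^H\gamma^{i-h}\bigl(r_i^\pi+\gamma P_i^\pi\tilde V_{i+1}-\tilde Q_i\bigr)(s_i,b_i)\Bigr],\qquad \Delta_h^{(2)}(s_h)=\mathbb E_{s_h}\Bigl[\sum_{i=h}^H\gamma^{i-h}\mathrm{KL}\bigl(\nu_i^\pi(\cdot\mid s_i)\,\|\,\tilde\nu_i(\cdot\mid s_i)\bigr)\Bigr],$$ with $\Delta^{(2)}_{H+1}=0$. Then for all $h\in[H]$ and $(s_h,b_h)\in\mathcal S\times\mathcal B$, $$A_h^\pi(s_h,b_h)-\tilde A_h(s_h,b_h)=(\mathbb E_{s_h,b_h}-\mathbb E_{s_h})\bigl[\Delta_h^{(1)}(s_h,b_h)-\gamma\eta^{-1}\Delta_{h+1}^{(2)}(s_{h+1})\bigr]+\eta^{-1}\mathrm{KL}\bigl(\nu_h^\pi(\cdot\mid s_h)\,\|\,\tilde\nu_h(\cdot\mid s_h)\bigr),$$ where $\mathrm{KL}(\nu_h^\pi(\cdot\mid s_h)\|\tilde\nu_h(\cdot\mid s_h))=\eta\,\mathbb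 E_{s_h}[A_h^\pi-\tilde A_h]$. In particular, in the myopic case ($\gamma=0$, $\tilde Q_h=\tilde r_h^\pi$ for some estimated reward $\tilde r$ with $\tilde r_h^\pi(s,b)=\sum_a\pi_h(a\mid s,b)\tilde r_h(s,a,b)$), $$A_h^\pi(s_h,b_h)-\tilde A_h(s_h,b_h)=(\mathbb E_{s_h,b_h}-\mathbb E_{s_h})\bigl[(r_h^\pi-\tilde r_h^\pi)(s_h,b_h)\bigr]+\eta^{-1}\mathrm{KL}\bigl(\nu_h^\pi(\cdot\mid s_h)\|\tilde\nu_h(\cdot\mid s_h)\bigr).$$
   Context: Episodic leader–follower Markov game (true model): state space $\mathcal S$, actions $\mathcal A,\mathcal B$, horizon $H$, transitions $P_h(\cdot\mid s,a,b)$, follower rewards $r_h$. Leader policy $\pi_h(\cdot\mid s,b)\in\Delta(\mathcal A)$; $r_h^\pi(s,b)=\sum_a\pi_h(a\mid s,b)r_h(s,a,b)$, $P_h^\pi(s'\mid s,b)=\sum_a\pi_h(a\mid s,b)P_h(s'\mid s,a,b)$. With $\eta>0$, $\gamma\in[0,1]$: $V_{H+1}^\pi=0$, $Q_h^\pi=r_h^\pi+\gamma P_h^\pi V_{h+1}^\pi$, $V_h^\pi(s)=\eta^{-1}\log\sum_be^{\eta Q_h^\pi(s,b)}$, $A_h^\pi=Q_h^\pi-V_h^\pi$, $\nu_h^\pi(b\mid s)=\exp(\eta A_h^\pi(s,b))$. $\mathbb E_{s_h}$, $\mathbb E_{s_h,b_h}$: conditional expectations given $s_h$, resp. $(s_h,b_h)$,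 over a trajectory of $(\pi,\nu^\pi)$ on the true model ($b_l\sim\nu_l^\pi(\cdot\mid s_l)$, $a_l\sim\pi_l(\cdot\mid s_l,b_l)$, $s_{l+1}\sim P_l$); in particular $\mathbb E_{s_h}$ also averages over $b_h\sim\nu_h^\pi(\cdot\mid s_h)$. *)

theory Defs
  imports Complex_Main
begin

text \<open>Types: 's states, 'a leader actions,
 'b follower actions (all finite). Time steps are 1..H.
 P h s a b s' = P_h(s' | s,a,b);  r h s a b = r_h(s,a,b);  pol h s b a = pi_h(a | s,b).\<close>

definition rpi :: "(nat \<Rightarrow> 's \<Rightarrow> 'b \<Rightarrow> 'a::finite \<Rightarrow> real) \<Rightarrow> (nat \<Rightarrow> 's \<Rightarrow> 'a \<Rightarrow> 'b \<Rightarrow> real)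
                   \<Rightarrow> nat \<Rightarrow> 's \<Rightarrow> 'b \<Rightarrow> real" where
  "rpi pol r h s b = (\<Sum>a\<in>UNIV. pol h s b a * r h s a b)"

definition Ppi :: "(nat \<Rightarrow> 's \<Rightarrow> 'b \<Rightarrow> 'a::finite \<Rightarrow> real) \<Rightarrow> (nat \<Rightarrow> 's \<Rightarrow> 'a \<Rightarrow> 'b \<Rightarrow> 's \<Rightarrow> real)
                   \<Rightarrow> nat \<Rightarrow> 's \<Rightarrow> 'b \<Rightarrow> 's \<Rightarrow> real" where
  "Ppi pol P h s b s' = (\<Sum>a\<in>UNIV. pol h s b a * P h s a b s')"

definition lse :: "real \<Rightarrow> ('b::finite \<Rightarrow> real) \<Rightarrow> real" where
  "lse \<eta> q = inverse \<eta> * ln (\<Sum>b\<in>UNIV. exp (\<eta> * q b))"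

text \<open>True value function, by recursion on the number k of remaining steps:
  Vrem k = V_{H+1-k}.\<close>
primrec Vrem :: "(nat \<Rightarrow> 's::finite \<Rightarrow> 'a::finite \<Rightarrow> 'b::finite \<Rightarrow> 's \<Rightarrow> real) \<Rightarrow> (nat \<Rightarrow> 's \<Rightarrow> 'a \<Rightarrow> 'b \<Rightarrow> real)
   \<Rightarrow> (nat \<Rightarrow> 's \<Rightarrow> 'b \<Rightarrow> 'a \<Rightarrow> real) \<Rightarrow> real \<Rightarrow> real \<Rightarrow> nat \<Rightarrow> nat \<Rightarrow> 's \<Rightarrow> real" where
  "Vrem P r pol \<gamma> \<eta> H 0 = (\<lambda>s. 0)"
| "Vrem P r pol \<gamma> \<eta> H (Suc k) = (\<lambda>s. lse \<eta> (\<lambda>b. rpi pol r (H - k) s b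
        + \<gamma> * (\<Sum>s'\<in>UNIV. Ppi pol P (H - k) s b s' * Vrem P r pol \<gamma> \<eta> H k s')))"

definition Vpi where
  "Vpi P r pol \<gamma> \<eta> H h s = Vrem P r pol \<gamma> \<eta> H (H + 1 - h) s"

definition Qpi where
  "Qpi P r pol \<gamma> \<eta> H h s b = rpi pol r h s b
      + \<gamma> * (\<Sum>s'\<in>UNIV. Ppi pol P h s b s' * Vpi P r pol \<gamma> \<eta> H (Suc h) s')"

definition Api where
  "Api P r pol \<gamma> \<eta> H h s b = Qpi P r pol \<gamma> \<eta> H h s b - Vpi P r pol \<gamma> \<eta> H h s"

definition nupi where
  "nupi P r pol \<gamma> \<eta> H h s b = exp (\<eta> * Api P r pol \<gamma> \<eta> H h s b)"

definition Vt :: "real \<Rightarrow> nat \<Rightarrow> (nat \<Rightarrow> 's \<Rightarrow> 'b::finite \<Rightarrow> real) \<Rightarrow> nat \<Rightarrow> 's \<Rightarrow> real" where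
  "Vt \<eta> H Qt h s = (if H < h then 0 else lse \<eta> (Qt h s))"

definition At where
  "At \<eta> H Qt h s b = Qt h s b - Vt \<eta> H Qt h s"

definition nut where
  "nut \<eta> H Qt h s b = exp (\<eta> * At \<eta> H Qt h s b)"

definition KL :: "('b::finite \<Rightarrow> real) \<Rightarrow> ('b \<Rightarrow> real) \<Rightarrow> real" where
  "KL p q = (\<Sum>b\<in>UNIV. p b * ln (p b / q b))"

text \<open>Law of (s_{h+k}, b_{h+k}) given (s_h, b_h) = (s, b) under (pi, nu^pi) on the true model.\<close>
primrec occ where
  "occ P r pol \<gamma> \<eta> H h s b 0 = (\<lambda>s' b'. if s' = s \<and> b' = b then 1 else 0)"
| "occ P r pol \<gamma> \<eta> H h s b (Suc k) = (\<lambda>s' b'. \<Sum>s0\<in>UNIV. \<Sum>b0\<in>UNIV.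
      occ P r pol \<gamma> \<eta> H h s b k s0 b0 * Ppi pol P (h + k) s0 b0 s'
        * nupi P r pol \<gamma> \<eta> H (h + k + 1) s' b')"

text \<open>E_{s_h,b_h}[f(s_i,b_i)] (for i >= h) and E_{s_h}[f(s_i,b_i)] (also averaging b_h ~ nu^pi_h).\<close>
definition Esb where
  "Esb P r pol \<gamma> \<eta> H h s b i f =
     (\<Sum>s'\<in>UNIV. \<Sum>b'\<in>UNIV. occ P r pol \<gamma> \<eta> H h s b (i - h) s' b' * f s' b')"

definition Es where
  "Es P r pol \<gamma> \<eta> H h s i f =
     (\<Sum>b\<in>UNIV. nupi P r pol \<gamma> \<eta> H h s b * Esb P r pol \<gamma> \<eta> H h s b i f)"

definition Delta1 where
  "Delta1 P r pol \<gamma> \<eta> H Qt h s b =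
     (\<Sum>i\<in>{h..H}. \<gamma> ^ (i - h) * Esb P r pol \<gamma> \<eta> H h s b i
        (\<lambda>s' b'. rpi pol r i s' b' + \<gamma> * (\<Sum>s''\<in>UNIV. Ppi pol P i s' b' s'' * Vt \<eta> H Qt (Suc i) s'')
                 - Qt i s' b'))"

definition Delta2 where
  "Delta2 P r pol \<gamma> \<eta> H Qt h s =
     (\<Sum>i\<in>{h..H}. \<gamma> ^ (i - h) * Es P r pol \<gamma> \<eta> H h s i
        (\<lambda>s' b'. KL (nupi P r pol \<gamma> \<eta> H i s') (nut \<eta> H Qt i s')))"

end

theory Submission
  imports Defs
begin

lemma swap4: "(\<Sum>a\<in>A. \<Sum>b\<in>B. \<Sum>c\<in>C. \<Sum>d\<in>D. F a b c d) = (\<Sum>c\<in>C. \<Sum>d\<in>D. \<Sum>a\<in>A. \<Sum>b\<in>B. (F a b c d :: real))"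
proof -
  have "(\<Sum>a\<in>A. \<Sum>b\<in>B. \<Sum>c\<in>C. \<Sum>d\<in>D. F a b c d) = (\<Sum>a\<in>A. \<Sum>c\<in>C. \<Sum>b\<in>B. \<Sum>d\<in>D. F a b c d)"
    by (rule sum.cong[OF refl], rule sum.swap)
  also have "\<dots> = (\<Sum>c\<in>C. \<Sum>a\<in>A. \<Sum>b\<in>B. \<Sum>d\<in>D. F a b c d)" by (rule sum.swap)
  also have "\<dots> = (\<Sum>c\<in>C. \<Sum>a\<in>A. \<Sum>d\<in>D. \<Sum>b\<in>B. F a b c d)"
    by (rule sum.cong[OF refl], rule sum.cong[OF refl], rule sum.swap)
  also have "\<dots> = (\<Sum>c\<in>C. \<Sum>d\<in>D. \<Sum>a\<in>A. \<Sum>b\<in>B. F a b c d)"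
    by (rule sum.cong[OF refl], rule sum.swap)
  finally show ?thesis .
qed

lemma swap3: "(\<Sum>a\<in>A. \<Sum>b\<in>B. \<Sum>c\<in>C. F a b c) = (\<Sum>b\<in>B. \<Sum>c\<in>C. \<Sum>a\<in>A. (F a b c :: real))"
proof -
  have "(\<Sum>a\<in>A. \<Sum>b\<in>B. \<Sum>c\<in>C. F a b c) = (\<Sum>b\<in>B. \<Sum>a\<in>A. \<Sum>c\<in>C. F a b c)"
    by (rule sum.swap)
  also have "\<dots> = (\<Sum>b\<in>B. \<Sum>c\<in>C. \<Sum>a\<in>A. F a b c)"
    by (rule sum.cong[OF refl], rule sum.swap)
  finally show ?thesis .
qed

lemma dsum3: "(\<Sum>x\<in>(UNIV::'x::finite set). \<Sum>y\<in>(UNIV::'y::finite set). if x = a \<and> y = c then g x y else (0::real)) = g a c"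
proof -
  have "\<And>x. (\<Sum>y\<in>(UNIV::'y set). if x = a \<and> y = c then g x y else (0::real)) = (if x = a then g a c else 0)"
    by (case_tac "x = a") (simp_all add: sum.delta')
  then show ?thesis by (simp add: sum.delta')
qed

lemma dsum1: "(\<Sum>x\<in>(UNIV::'x::finite set). \<Sum>y\<in>(UNIV::'y::finite set). (if x = a \<and> y = c then 1 else 0) * g x y) = (g a c::real)"
  using dsum3[of a c g] by (simp add: if_distrib[where f="\<lambda>x. x * _"] cong: if_cong)

lemma dsum2: "(\<Sum>x\<in>(UNIV::'x::finite set). \<Sum>y\<in>(UNIV::'y::finite set). if a = x \<and> c = y then g x y else 0) = (g a c::real)"
  using dsum3[of a c g] by (simp add: eq_commute[of a] eq_commute[of c])

context
  fixes P :: "nat \<Rightarrow> 's::finite \<Rightarrow> 'a::finite \<Rightarrow> 'b::finite \<Rightarrow> 's \<Rightarrow> real"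
    and r :: "nat \<Rightarrow> 's \<Rightarrow> 'a \<Rightarrow> 'b \<Rightarrow> real"
    and pol :: "nat \<Rightarrow> 's \<Rightarrow> 'b \<Rightarrow> 'a \<Rightarrow> real"
    and \<gamma> \<eta> :: real and H :: nat
begin

abbreviation "nu \<equiv> nupi P r pol \<gamma> \<eta> H"
abbreviation "PP \<equiv> Ppi pol P"
abbreviation "oc \<equiv> occ P r pol \<gamma> \<eta> H"
abbreviation "E2 \<equiv> Esb P r pol \<gamma> \<eta> H"
abbreviation "E1 \<equiv> Es P r pol \<gamma> \<eta> H"
abbreviation "VV \<equiv> Vpi P r pol \<gamma> \<eta> H"
abbreviation "QQ \<equiv> Qpi P r pol \<gamma> \<eta> H"
abbreviation "AA \<equiv> Api P r pol \<gamma> \<eta> H"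
abbreviation "D1 \<equiv> Delta1 P r pol \<gamma> \<eta> H"
abbreviation "D2 \<equiv> Delta2 P r pol \<gamma> \<eta> H"

lemma occ_markov:
  "oc h s b (Suc k) s' b' = (\<Sum>s1\<in>UNIV. \<Sum>b1\<in>UNIV. PP h s b s1 * nu (Suc h) s1 b1 * oc (Suc h) s1 b1 k s' b')"
proof (induction k arbitrary: s' b')
  case 0
  show ?case
    using dsum1[of s b "\<lambda>x y. PP h x y s' * nu (Suc h) s' b'"]
      dsum2[of s' b' "\<lambda>x y. PP h s b x * nu (Suc h) x y"]
    by (simp add: mult.assoc if_distrib[where f="\<lambda>x. _ * x"] cong: if_cong)
next
  case (Suc k)
  have "oc h s b (Suc (Suc k)) s' b' = (\<Sum>s0\<in>UNIV. \<Sum>b0\<in>UNIV.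
      (\<Sum>s1\<in>UNIV. \<Sum>b1\<in>UNIV. PP h s b s1 * nu (Suc h) s1 b1 * oc (Suc h) s1 b1 k s0 b0)
        * PP (h + Suc k) s0 b0 s' * nu (h + Suc k + 1) s' b')"
    apply (subst occ.simps(2)) by (simp only: Suc.IH)
  also have "\<dots> = (\<Sum>s0\<in>UNIV. \<Sum>b0\<in>UNIV. \<Sum>s1\<in>UNIV. \<Sum>b1\<in>UNIV. PP h s b s1 * nu (Suc h) s1 b1 *
      (oc (Suc h) s1 b1 k s0 b0 * PP (Suc h + k) s0 b0 s' * nu (Suc h + k + 1) s' b'))"
    by (simp add: sum_distrib_right mult.assoc)
  also have "\<dots> = (\<Sum>s1\<in>UNIV. \<Sum>b1\<in>UNIV. \<Sum>s0\<in>UNIV. \<Sum>b0\<in>UNIV. PP h s b s1 * nu (Suc h) s1 b1 *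
      (oc (Suc h) s1 b1 k s0 b0 * PP (Suc h + k) s0 b0 s' * nu (Suc h + k + 1) s' b'))"
    by (rule swap4)
  also have "\<dots> = (\<Sum>s1\<in>UNIV. \<Sum>b1\<in>UNIV. PP h s b s1 * nu (Suc h) s1 b1 * oc (Suc h) s1 b1 (Suc k) s' b')"
    by (simp add: sum_distrib_left mult.assoc)
  finally show ?case .
qed

lemma occ_one: "oc h s b (Suc 0) s' b' = PP h s b s' * nu (Suc h) s' b'"
  using dsum1[of s b "\<lambda>x y. PP h x y s' * nu (Suc h) s' b'"]
  by (simp add: mult.assoc)

lemma Esb_same: "E2 h s b h f = f s b"
  unfolding Esb_def by (simp add: dsum1)

lemma Esb_step: assumes "h < i"
  shows "E2 h s b i f = (\<Sum>s1\<in>UNIV. \<Sum>b1\<in>UNIV. PP h s b s1 * nu (Suc h) s1 b1 * E2 (Suc h) s1 b1 i f)"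
proof -
  have ih: "i - h = Suc (i - Suc h)" using assms by simp
  have "E2 h s b i f = (\<Sum>s'\<in>UNIV. \<Sum>b'\<in>UNIV. \<Sum>s1\<in>UNIV. \<Sum>b1\<in>UNIV.
      PP h s b s1 * nu (Suc h) s1 b1 * (oc (Suc h) s1 b1 (i - Suc h) s' b' * f s' b'))"
    unfolding Esb_def ih occ_markov by (simp add: sum_distrib_right mult.assoc)
  also have "\<dots> = (\<Sum>s1\<in>UNIV. \<Sum>b1\<in>UNIV. \<Sum>s'\<in>UNIV. \<Sum>b'\<in>UNIV.
      PP h s b s1 * nu (Suc h) s1 b1 * (oc (Suc h) s1 b1 (i - Suc h) s' b' * f s' b'))"
    by (rule swap4)
  also have "\<dots> = (\<Sum>s1\<in>UNIV. \<Sum>b1\<in>UNIV. PP h s b s1 * nu (Suc h) s1 b1 * E2 (Suc h) s1 b1 i f)"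
    unfolding Esb_def by (simp add: sum_distrib_left)
  finally show ?thesis .
qed

lemma Es_step: assumes "h < i"
  shows "E1 h s i f = (\<Sum>b\<in>UNIV. nu h s b * (\<Sum>s1\<in>UNIV. PP h s b s1 * E1 (Suc h) s1 i f))"
  unfolding Es_def Esb_step[OF assms]
  by (simp add: sum_distrib_left mult.assoc mult.left_commute)

lemma V_lse: assumes "h \<le> H" shows "VV h s = lse \<eta> (QQ h s)"
proof -
  have e: "H + 1 - h = Suc (H - h)" "H - (H - h) = h" "H + 1 - Suc h = H - h" using assms by auto
  show ?thesis unfolding Vpi_def Qpi_def e by (simp add: e Vpi_def)
qed

lemma nu_sum: assumes "h \<le> H" "\<eta> \<noteq> 0" shows "(\<Sum>b\<in>UNIV. nu h s b) = 1"
proof -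
  define S where "S = (\<Sum>b\<in>UNIV. exp (\<eta> * QQ h s b))"
  have Spos: "S > 0" unfolding S_def by (intro sum_pos) auto
  have V: "\<eta> * VV h s = ln S" using assms unfolding V_lse[OF assms(1)] lse_def S_def by simp
  have "\<And>b. nu h s b = exp (\<eta> * QQ h s b) / S"
    unfolding nupi_def Api_def right_diff_distrib V exp_diff using Spos by simp
  then show ?thesis using Spos by (simp add: sum_divide_distrib[symmetric] S_def)
qed

lemma KL_eq: "KL (nu h s) (nut \<eta> H Qt h s) = \<eta> * (\<Sum>b\<in>UNIV. nu h s b * (AA h s b - At \<eta> H Qt h s b))"
  unfolding KL_def nupi_def nut_def
  by (simp add: exp_diff[symmetric] right_diff_distrib sum_distrib_left mult_ac)

definition gg :: "(nat \<Rightarrow> 's \<Rightarrow> 'b \<Rightarrow> real) \<Rightarrow> nat \<Rightarrow> 's \<Rightarrow> 'b \<Rightarrow> real" where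
  "gg Qt i s' b' = rpi pol r i s' b' + \<gamma> * (\<Sum>s''\<in>UNIV. PP i s' b' s'' * Vt \<eta> H Qt (Suc i) s'') - Qt i s' b'"

lemma Delta1_rec: assumes "h \<le> H"
  shows "D1 Qt h s b = gg Qt h s b
     + \<gamma> * (\<Sum>s1\<in>UNIV. \<Sum>b1\<in>UNIV. PP h s b s1 * nu (Suc h) s1 b1 * D1 Qt (Suc h) s1 b1)"
proof -
  have I: "{h..H} = insert h {Suc h..H}" using assms by auto
  have "D1 Qt h s b = gg Qt h s b + (\<Sum>i\<in>{Suc h..H}. \<gamma> ^ (i - h) * E2 h s b i (gg Qt i))"
    unfolding Delta1_def I gg_def[abs_def] by (simp add: Esb_same)
  also have "(\<Sum>i\<in>{Suc h..H}. \<gamma> ^ (i - h) * E2 h s b i (gg Qt i))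
     = (\<Sum>i\<in>{Suc h..H}. \<Sum>s1\<in>UNIV. \<Sum>b1\<in>UNIV. \<gamma> * (PP h s b s1 * nu (Suc h) s1 b1 * (\<gamma> ^ (i - Suc h) * E2 (Suc h) s1 b1 i (gg Qt i))))"
  proof (rule sum.cong[OF refl])
    fix i assume "i \<in> {Suc h..H}"
    then have hi: "h < i" and p: "\<gamma> ^ (i - h) = \<gamma> * \<gamma> ^ (i - Suc h)"
      by (auto simp: power_Suc[symmetric] Suc_diff_Suc)
    show "\<gamma> ^ (i - h) * E2 h s b i (gg Qt i) = (\<Sum>s1\<in>UNIV. \<Sum>b1\<in>UNIV. \<gamma> * (PP h s b s1 * nu (Suc h) s1 b1 * (\<gamma> ^ (i - Suc h) * E2 (Suc h) s1 b1 i (gg Qt i))))"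
      unfolding Esb_step[OF hi] p by (simp add: sum_distrib_left mult_ac)
  qed
  also have "\<dots> = (\<Sum>s1\<in>UNIV. \<Sum>b1\<in>UNIV. \<Sum>i\<in>{Suc h..H}. \<gamma> * (PP h s b s1 * nu (Suc h) s1 b1 * (\<gamma> ^ (i - Suc h) * E2 (Suc h) s1 b1 i (gg Qt i))))"
    by (rule swap3)
  also have "\<dots> = \<gamma> * (\<Sum>s1\<in>UNIV. \<Sum>b1\<in>UNIV. PP h s b s1 * nu (Suc h) s1 b1 * D1 Qt (Suc h) s1 b1)"
    unfolding Delta1_def gg_def[abs_def] by (simp add: sum_distrib_left)
  finally show ?thesis .
qed

lemma Delta2_rec: assumes "h \<le> H" "(\<Sum>b\<in>UNIV. nu h s b) = 1"
  shows "D2 Qt h s = KL (nu h s) (nut \<eta> H Qt h s)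
     + \<gamma> * (\<Sum>b\<in>UNIV. nu h s b * (\<Sum>s1\<in>UNIV. PP h s b s1 * D2 Qt (Suc h) s1))"
proof -
  have I: "{h..H} = insert h {Suc h..H}" using assms by auto
  define f where "f i = (\<lambda>(s'::'s) (b'::'b). KL (nu i s') (nut \<eta> H Qt i s'))" for i
  have "D2 Qt h s = KL (nu h s) (nut \<eta> H Qt h s) + (\<Sum>i\<in>{Suc h..H}. \<gamma> ^ (i - h) * E1 h s i (f i))"
    unfolding Delta2_def I f_def by (simp add: Es_def Esb_same sum_distrib_right[symmetric] assms(2))
  also have "(\<Sum>i\<in>{Suc h..H}. \<gamma> ^ (i - h) * E1 h s i (f i))
     = (\<Sum>i\<in>{Suc h..H}. \<Sum>b\<in>UNIV. \<Sum>s1\<in>UNIV. \<gamma> * (nu h s b * (PP h s b s1 * (\<gamma> ^ (i - Suc h) * E1 (Suc h) s1 i (f i)))))"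
  proof (rule sum.cong[OF refl])
    fix i assume "i \<in> {Suc h..H}"
    then have hi: "h < i" and p: "\<gamma> ^ (i - h) = \<gamma> * \<gamma> ^ (i - Suc h)"
      by (auto simp: power_Suc[symmetric] Suc_diff_Suc)
    show "\<gamma> ^ (i - h) * E1 h s i (f i) = (\<Sum>b\<in>UNIV. \<Sum>s1\<in>UNIV. \<gamma> * (nu h s b * (PP h s b s1 * (\<gamma> ^ (i - Suc h) * E1 (Suc h) s1 i (f i)))))"
      unfolding Es_step[OF hi] p by (simp add: sum_distrib_left mult_ac)
  qed
  also have "\<dots> = (\<Sum>b\<in>UNIV. \<Sum>s1\<in>UNIV. \<Sum>i\<in>{Suc h..H}. \<gamma> * (nu h s b * (PP h s b s1 * (\<gamma> ^ (i - Suc h) * E1 (Suc h) s1 i (f i)))))"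
    by (rule swap3)
  also have "\<dots> = \<gamma> * (\<Sum>b\<in>UNIV. nu h s b * (\<Sum>s1\<in>UNIV. PP h s b s1 * D2 Qt (Suc h) s1))"
    unfolding Delta2_def f_def by (simp add: sum_distrib_left)
  finally show ?thesis .
qed

lemma D2_end: "D2 Qt (Suc H) s = 0"
  unfolding Delta2_def by simp

lemma D1_end: "D1 Qt (Suc H) s b = 0"
  unfolding Delta1_def by simp

lemma V_end: "VV (Suc H) s = 0"
  unfolding Vpi_def by simp

lemma Vt_end: "Vt \<eta> H Qt (Suc H) s = 0"
  unfolding Vt_def by simp

lemma main_ind: assumes eta: "\<eta> \<noteq> 0"
  shows "H - h = n \<Longrightarrow> h \<le> H \<Longrightarrow> D1 Qt h s b = QQ h s b - Qt h s b
           + \<gamma> / \<eta> * (\<Sum>s1\<in>UNIV. PP h s b s1 * D2 Qt (Suc h) s1)"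
proof (induction n arbitrary: h s b)
  case 0
  then have hH: "h = H" by simp
  show ?case unfolding hH Delta1_rec[OF order.refl] D1_end D2_end
    by (simp add: gg_def Qpi_def V_end Vt_end)
next
  case (Suc m)
  then have hl: "Suc h \<le> H" and m: "H - Suc h = m" by auto
  have W: "(\<Sum>b1\<in>UNIV. nu (Suc h) s1 b1 * D1 Qt (Suc h) s1 b1)
     = (VV (Suc h) s1 - Vt \<eta> H Qt (Suc h) s1) + D2 Qt (Suc h) s1 / \<eta>" for s1
  proof -
    have ns: "(\<Sum>b\<in>UNIV. nu (Suc h) s1 b) = 1" by (rule nu_sum[OF hl eta])
    have ns2: "\<And>c. (\<Sum>b\<in>UNIV. c * nu (Suc h) s1 b) = c" by (simp add: sum_distrib_left[symmetric] ns)
    have kl: "KL (nu (Suc h) s1) (nut \<eta> H Qt (Suc h) s1)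
       = \<eta> * ((\<Sum>b\<in>UNIV. nu (Suc h) s1 b * (QQ (Suc h) s1 b - Qt (Suc h) s1 b)) - (VV (Suc h) s1 - Vt \<eta> H Qt (Suc h) s1))"
      unfolding KL_eq Api_def At_def
      by (simp add: algebra_simps sum.distrib sum_subtractf ns2)
    have d2: "D2 Qt (Suc h) s1 = KL (nu (Suc h) s1) (nut \<eta> H Qt (Suc h) s1)
     + \<gamma> * (\<Sum>b\<in>UNIV. nu (Suc h) s1 b * (\<Sum>s2\<in>UNIV. PP (Suc h) s1 b s2 * D2 Qt (Suc (Suc h)) s2))"
      by (rule Delta2_rec[OF hl ns])
    have "(\<Sum>b1\<in>UNIV. nu (Suc h) s1 b1 * D1 Qt (Suc h) s1 b1)
       = (\<Sum>b1\<in>UNIV. nu (Suc h) s1 b1 * (QQ (Suc h) s1 b1 - Qt (Suc h) s1 b1))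
         + \<gamma> / \<eta> * (\<Sum>b\<in>UNIV. nu (Suc h) s1 b * (\<Sum>s2\<in>UNIV. PP (Suc h) s1 b s2 * D2 Qt (Suc (Suc h)) s2))"
      by (simp add: Suc.IH[OF m hl] distrib_left sum.distrib sum_distrib_left mult_ac)
    then show ?thesis using kl d2 eta by (simp add: field_simps)
  qed
  have "D1 Qt h s b = gg Qt h s b
     + \<gamma> * (\<Sum>s1\<in>UNIV. PP h s b s1 * (\<Sum>b1\<in>UNIV. nu (Suc h) s1 b1 * D1 Qt (Suc h) s1 b1))"
    using Delta1_rec[of h Qt s b] hl by (simp add: sum_distrib_left mult.assoc)
  also have "\<dots> = gg Qt h s b
     + \<gamma> * (\<Sum>s1\<in>UNIV. PP h s b s1 * (VV (Suc h) s1 - Vt \<eta> H Qt (Suc h) s1))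
     + \<gamma> / \<eta> * (\<Sum>s1\<in>UNIV. PP h s b s1 * D2 Qt (Suc h) s1)"
    unfolding W by (simp add: distrib_left sum.distrib sum_distrib_left mult_ac)
  also have "\<dots> = QQ h s b - Qt h s b + \<gamma> / \<eta> * (\<Sum>s1\<in>UNIV. PP h s b s1 * D2 Qt (Suc h) s1)"
    unfolding gg_def Qpi_def by (simp add: algebra_simps sum_subtractf)
  finally show ?case .
qed

end

theorem mainTheorem13:
  fixes P :: "nat \<Rightarrow> 's::finite \<Rightarrow> 'a::finite \<Rightarrow> 'b::finite \<Rightarrow> 's \<Rightarrow> real"
    and r :: "nat \<Rightarrow> 's \<Rightarrow> 'a \<Rightarrow> 'b \<Rightarrow> real"
    and pol :: "nat \<Rightarrow> 's \<Rightarrow> 'b \<Rightarrow> 'a \<Rightarrow> real"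
    and Qt :: "nat \<Rightarrow> 's \<Rightarrow> 'b \<Rightarrow> real"
    and rt :: "nat \<Rightarrow> 's \<Rightarrow> 'a \<Rightarrow> 'b \<Rightarrow> real"
    and \<gamma> \<eta> :: real and H h :: nat and s :: 's and b :: 'b
  assumes eta: "\<eta> > 0"
    and gamma: "0 \<le> \<gamma>" "\<gamma> \<le> 1"
    and P_nonneg: "\<And>i s a b s'. i \<in> {1..H} \<Longrightarrow> P i s a b s' \<ge> 0"
    and P_sum: "\<And>i s a b. i \<in> {1..H} \<Longrightarrow> (\<Sum>s'\<in>UNIV. P i s a b s') = 1"
    and pol_nonneg: "\<And>i s b a. i \<in> {1..H} \<Longrightarrow> pol i s b a \<ge> 0"
    and pol_sum: "\<And>i s b. i \<in> {1..H} \<Longrightarrow> (\<Sum>a\<in>UNIV. pol i s b a) = 1"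
    and h: "h \<in> {1..H}"
  shows
   "Api P r pol \<gamma> \<eta> H h s b - At \<eta> H Qt h s b =
      (Esb P r pol \<gamma> \<eta> H h s b h (\<lambda>s' b'. Delta1 P r pol \<gamma> \<eta> H Qt h s' b')
         - \<gamma> / \<eta> * Esb P r pol \<gamma> \<eta> H h s b (Suc h) (\<lambda>s' b'. Delta2 P r pol \<gamma> \<eta> H Qt (Suc h) s'))
    - (Es P r pol \<gamma> \<eta> H h s h (\<lambda>s' b'. Delta1 P r pol \<gamma> \<eta> H Qt h s' b')
         - \<gamma> / \<eta> * Es P r pol \<gamma> \<eta> H h s (Suc h) (\<lambda>s' b'. Delta2 P r pol \<gamma> \<eta> H Qt (Suc h) s'))
    + inverse \<eta> * KL (nupi P r pol \<gamma> \<eta> H h s) (nut \<eta> H Qt h s)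
   \<and> KL (nupi P r pol \<gamma> \<eta> H h s) (nut \<eta> H Qt h s)
      = \<eta> * Es P r pol \<gamma> \<eta> H h s h (\<lambda>s' b'. Api P r pol \<gamma> \<eta> H h s' b' - At \<eta> H Qt h s' b')
   \<and> ((\<gamma> = 0 \<and> (\<forall>i\<in>{1..H}. \<forall>s' b'. Qt i s' b' = rpi pol rt i s' b')) \<longrightarrow>
       Api P r pol \<gamma> \<eta> H h s b - At \<eta> H Qt h s b =
         Esb P r pol \<gamma> \<eta> H h s b h (\<lambda>s' b'. rpi pol r h s' b' - rpi pol rt h s' b')
         - Es P r pol \<gamma> \<eta> H h s h (\<lambda>s' b'. rpi pol r h s' b' - rpi pol rt h s' b')
         + inverse \<eta> * KL (nupi P r pol \<gamma> \<eta> H h s) (nut \<eta> H Qt h s))"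
proof -
  let ?nu = "nupi P r pol \<gamma> \<eta> H h s"
  have hH: "h \<le> H" using h by simp
  have en: "\<eta> \<noteq> 0" using eta by simp
  have ns: "(\<Sum>b\<in>UNIV. ?nu b) = 1" by (rule nu_sum[OF hH en])
  have ns2: "\<And>c. (\<Sum>b\<in>UNIV. c * ?nu b) = c" by (simp add: sum_distrib_left[symmetric] ns)
  have KLe: "inverse \<eta> * KL ?nu (nut \<eta> H Qt h s)
      = (\<Sum>b\<in>UNIV. ?nu b * (Qpi P r pol \<gamma> \<eta> H h s b - Qt h s b)) - (Vpi P r pol \<gamma> \<eta> H h s - Vt \<eta> H Qt h s)"
  proof -
    have "inverse \<eta> * KL ?nu (nut \<eta> H Qt h s) = (\<Sum>b\<in>UNIV. ?nu b * (Api P r pol \<gamma> \<eta> H h s b - At \<eta> H Qt h s b))"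
      unfolding KL_eq using en by simp
    then show ?thesis unfolding Api_def At_def
      by (simp add: algebra_simps sum.distrib sum_subtractf ns2)
  qed
  have K2: "KL ?nu (nut \<eta> H Qt h s)
      = \<eta> * Es P r pol \<gamma> \<eta> H h s h (\<lambda>s' b'. Api P r pol \<gamma> \<eta> H h s' b' - At \<eta> H Qt h s' b')"
    unfolding KL_eq Es_def Esb_same ..
  have X: "Delta1 P r pol \<gamma> \<eta> H Qt h s b' - \<gamma> / \<eta> * Esb P r pol \<gamma> \<eta> H h s b' (Suc h) (\<lambda>s' b'. Delta2 P r pol \<gamma> \<eta> H Qt (Suc h) s')
      = Qpi P r pol \<gamma> \<eta> H h s b' - Qt h s b'" for b'
  proof -
    have t: "Ppi pol P h s b' s1 * Delta2 P r pol \<gamma> \<eta> H Qt (Suc h) s1 * (\<Sum>b1\<in>UNIV. nupi P r pol \<gamma> \<eta> H (Suc h) s1 b1)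
        = Ppi pol P h s b' s1 * Delta2 P r pol \<gamma> \<eta> H Qt (Suc h) s1" for s1
    proof (cases "Suc h \<le> H")
      case True
      have "(\<Sum>b1\<in>UNIV. nupi P r pol \<gamma> \<eta> H (Suc h) s1 b1) = 1" by (rule nu_sum[OF True en])
      then show ?thesis by simp
    next
      case False then have "h = H" using hH by simp
      then show ?thesis by (simp add: D2_end)
    qed
    have "Esb P r pol \<gamma> \<eta> H h s b' (Suc h) (\<lambda>s' b'. Delta2 P r pol \<gamma> \<eta> H Qt (Suc h) s')
       = (\<Sum>s1\<in>UNIV. Ppi pol P h s b' s1 * Delta2 P r pol \<gamma> \<eta> H Qt (Suc h) s1 * (\<Sum>b1\<in>UNIV. nupi P r pol \<gamma> \<eta> H (Suc h) s1 b1))"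
    proof -
      have e: "Suc h - h = Suc 0" by simp
      have "Esb P r pol \<gamma> \<eta> H h s b' (Suc h) (\<lambda>s' b'. Delta2 P r pol \<gamma> \<eta> H Qt (Suc h) s')
        = (\<Sum>s1\<in>UNIV. \<Sum>b1\<in>UNIV. Ppi pol P h s b' s1 * nupi P r pol \<gamma> \<eta> H (Suc h) s1 b1 * Delta2 P r pol \<gamma> \<eta> H Qt (Suc h) s1)"
        unfolding Esb_def e occ_one ..
      then show ?thesis by (simp add: sum_distrib_left mult_ac)
    qed
    also have "\<dots> = (\<Sum>s1\<in>UNIV. Ppi pol P h s b' s1 * Delta2 P r pol \<gamma> \<eta> H Qt (Suc h) s1)"
      by (rule sum.cong[OF refl t])
    finally show ?thesis using main_ind[OF en refl hH, where Qt=Qt and s=s and b=b' and P=P and r=r and pol=pol and \<gamma>=\<gamma>] by simp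
  qed
  have c1: "Api P r pol \<gamma> \<eta> H h s b - At \<eta> H Qt h s b =
      (Esb P r pol \<gamma> \<eta> H h s b h (\<lambda>s' b'. Delta1 P r pol \<gamma> \<eta> H Qt h s' b')
         - \<gamma> / \<eta> * Esb P r pol \<gamma> \<eta> H h s b (Suc h) (\<lambda>s' b'. Delta2 P r pol \<gamma> \<eta> H Qt (Suc h) s'))
    - (Es P r pol \<gamma> \<eta> H h s h (\<lambda>s' b'. Delta1 P r pol \<gamma> \<eta> H Qt h s' b')
         - \<gamma> / \<eta> * Es P r pol \<gamma> \<eta> H h s (Suc h) (\<lambda>s' b'. Delta2 P r pol \<gamma> \<eta> H Qt (Suc h) s'))
    + inverse \<eta> * KL (nupi P r pol \<gamma> \<eta> H h s) (nut \<eta> H Qt h s)"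
  proof -
    have "Es P r pol \<gamma> \<eta> H h s h (\<lambda>s' b'. Delta1 P r pol \<gamma> \<eta> H Qt h s' b')
         - \<gamma> / \<eta> * Es P r pol \<gamma> \<eta> H h s (Suc h) (\<lambda>s' b'. Delta2 P r pol \<gamma> \<eta> H Qt (Suc h) s')
        = (\<Sum>b\<in>UNIV. ?nu b * (Delta1 P r pol \<gamma> \<eta> H Qt h s b - \<gamma> / \<eta> * Esb P r pol \<gamma> \<eta> H h s b (Suc h) (\<lambda>s' b'. Delta2 P r pol \<gamma> \<eta> H Qt (Suc h) s')))"
      unfolding Es_def Esb_same by (simp add: right_diff_distrib sum_subtractf sum_distrib_left mult_ac)
    also have "\<dots> = (\<Sum>b\<in>UNIV. ?nu b * (Qpi P r pol \<gamma> \<eta> H h s b - Qt h s b))"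
      unfolding X ..
    finally show ?thesis unfolding Esb_same X KLe Api_def At_def by simp
  qed
  have c3: "Api P r pol \<gamma> \<eta> H h s b - At \<eta> H Qt h s b =
         Esb P r pol \<gamma> \<eta> H h s b h (\<lambda>s' b'. rpi pol r h s' b' - rpi pol rt h s' b')
         - Es P r pol \<gamma> \<eta> H h s h (\<lambda>s' b'. rpi pol r h s' b' - rpi pol rt h s' b')
         + inverse \<eta> * KL (nupi P r pol \<gamma> \<eta> H h s) (nut \<eta> H Qt h s)"
    if g0: "\<gamma> = 0" and qt: "\<forall>i\<in>{1..H}. \<forall>s' b'. Qt i s' b' = rpi pol rt i s' b'"
  proof -
    have q: "Qpi P r pol \<gamma> \<eta> H h s' b' - Qt h s' b' = rpi pol r h s' b' - rpi pol rt h s' b'" for s' b'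
      using qt h g0 by (simp add: Qpi_def)
    show ?thesis unfolding Es_def Esb_same KLe Api_def At_def q[symmetric] by simp
  qed
  show ?thesis using c1 K2 c3 by blast
qed

end
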